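(* Let $\Gamma$ be a simplicial complex whose $1$-skeleton (graph) contains, as an induced subgraph, one of the following graphs on four vertices: the disjoint union of two edges $2K_2$, the path $P_4$ with three edges, or the $4$-cycle $C_4$. Then for every simplicial complex $\Delta$ (on a vertex set disjoint from that of $\Gamma$), \[ \mathrm{ctd}(\Delta*\Gamma)\;\ge\;\mathrm{ctd}(\Delta)+1. \]
   Context: Simplicial complexes contain the empty face. Given convex polytopes $P_1,\dots,P_n\subset\mathbb{R}^d$ each containing the origin and a point $\mu\in\mathbb{R}^d$, write $P_\sigma=\sum_{i\in\sigma}P_i$ (Minkowski sum) for $\sigma\subseteq[n]$, with $P_\emptyset=\{0\}$; the Minkowski complex $\Delta(\mathcal{P};\mu)$ is the simplicial complex on vertex set $[n]$ whose faces are the $\sigma\subseteq[n]$ with $\mu\notin P_\sigma$. The convex threshold dimension $\mathrm{ctd}(\Delta)$ of a simplicial complex $\Delta$ on vertex set $[n]$ is the smallest $d$ such that $\Delta=\Delta(\mathcal{P};\mu)$ for some family $\mathcal{P}=(P_1,\dots,P_n)$ of convex bodies (equivalently, convex polytopes) in $\mathbb{R}^d$ containing the origin and some $\mu\in\mathbb{R}^d$; this is finite for every simplicial complex. The join of complexes $\Delta$ and $\Gamma$ on disjoint vertex sets is $\Delta*\Gamma=\{\sigma\uplus\tau:\sigma\in\Delta,\tau\in\Gamma\}$. *)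

theory Defs
  imports Main "HOL-Analysis.Analysis"
begin

definition simplicial_complex :: "'v set \<Rightarrow> 'v set set \<Rightarrow> bool" where
  "simplicial_complex V K \<longleftrightarrow> finite V \<and> {} \<in> K \<and> (\<forall>\<sigma>\<in>K. \<sigma> \<subseteq> V)
     \<and> (\<forall>\<sigma>\<in>K. \<forall>\<tau>. \<tau> \<subseteq> \<sigma> \<longrightarrow> \<tau> \<in> K)"

definition join :: "'v set set \<Rightarrow> 'v set set \<Rightarrow> 'v set set" where
  "join K L = {\<sigma> \<union> \<tau> | \<sigma> \<tau>. \<sigma> \<in> K \<and> \<tau> \<in> L}"

text \<open>Euclidean space R^d, modelled as real sequences vanishing from index d on.\<close>
definition Rd :: "nat \<Rightarrow> (nat \<Rightarrow> real) set" where
  "Rd d = {x. \<forall>j\<ge>d. x j = 0}"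

definition polytope_in :: "nat \<Rightarrow> (nat \<Rightarrow> real) set \<Rightarrow> bool" where
  "polytope_in d P \<longleftrightarrow> (\<exists>S. finite S \<and> S \<subseteq> Rd d \<and>
     P = {(\<lambda>j. \<Sum>s\<in>S. u s * s j) | u. (\<forall>s\<in>S. 0 \<le> u s) \<and> (\<Sum>s\<in>S. u s) = 1})"

definition msum :: "('v \<Rightarrow> (nat \<Rightarrow> real) set) \<Rightarrow> 'v set \<Rightarrow> (nat \<Rightarrow> real) set" where
  "msum P \<sigma> = {(\<lambda>j. \<Sum>i\<in>\<sigma>. x i j) | x. \<forall>i\<in>\<sigma>. x i \<in> P i}"

definition minkowski_complex :: "'v set \<Rightarrow> ('v \<Rightarrow> (nat \<Rightarrow> real) set) \<Rightarrow> (nat \<Rightarrow> real) \<Rightarrow> 'v set set" where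
  "minkowski_complex V P \<mu> = {\<sigma>. \<sigma> \<subseteq> V \<and> \<mu> \<notin> msum P \<sigma>}"

definition ctd_realizable :: "nat \<Rightarrow> 'v set \<Rightarrow> 'v set set \<Rightarrow> bool" where
  "ctd_realizable d V K \<longleftrightarrow> (\<exists>P \<mu>. (\<forall>i\<in>V. polytope_in d (P i) \<and> (\<lambda>_. 0) \<in> P i)
     \<and> \<mu> \<in> Rd d \<and> K = minkowski_complex V P \<mu>)"

definition ctd :: "'v set \<Rightarrow> 'v set set \<Rightarrow> nat" where
  "ctd V K = (LEAST d. ctd_realizable d V K)"

definition edge :: "'v set set \<Rightarrow> 'v \<Rightarrow> 'v \<Rightarrow> bool" where
  "edge K a b \<longleftrightarrow> a \<noteq> b \<and> {a, b} \<in> K"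

definition has_induced_2K2_P4_C4 :: "'v set \<Rightarrow> 'v set set \<Rightarrow> bool" where
  "has_induced_2K2_P4_C4 V K \<longleftrightarrow> (\<exists>a b c d. {a,b,c,d} \<subseteq> V \<and> distinct [a,b,c,d] \<and>
     edge K a b \<and> edge K c d \<and> \<not> edge K a c \<and> \<not> edge K b d \<and>
     ((\<not> edge K b c \<and> \<not> edge K a d) \<comment> \<open>2K_2\<close>
      \<or> (edge K b c \<and> \<not> edge K a d) \<comment> \<open>P_4: a-b-c-d\<close>
      \<or> (edge K b c \<and> edge K a d)))" \<comment> \<open>C_4: a-b-c-d-a\<close>

end

theory Submission
  imports Defs
begin

definition hull_of :: "(nat \<Rightarrow> real) set \<Rightarrow> (nat \<Rightarrow> real) set" where
  "hull_of S = {(\<lambda>j. \<Sum>s\<in>S. u s * s j) | u. (\<forall>s\<in>S. 0 \<le> u s) \<and> (\<Sum>s\<in>S. u s) = 1}"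

lemma polytope_in_hull: "polytope_in d P \<longleftrightarrow> (\<exists>S. finite S \<and> S \<subseteq> Rd d \<and> P = hull_of S)"
  unfolding polytope_in_def hull_of_def by simp

lemma hull_ofI:
  "(\<forall>s\<in>S. 0 \<le> u s) \<Longrightarrow> sum u S = 1 \<Longrightarrow> x = (\<lambda>j. \<Sum>s\<in>S. u s * s j) \<Longrightarrow> x \<in> hull_of S"
  unfolding hull_of_def by blast

lemma hull_mem:
  assumes "finite S" "x \<in> S" shows "x \<in> hull_of S"
proof -
  let ?u = "\<lambda>s. if s = x then 1 else (0::real)"
  have "(\<Sum>s\<in>S. ?u s * s j) = x j" for j
  proof -
    have "(\<Sum>s\<in>S. ?u s * s j) = (\<Sum>s\<in>S. if s = x then s j else 0)"
      by (rule sum.cong) auto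
    also have "\<dots> = x j" using assms by simp
    finally show ?thesis .
  qed
  moreover have "(\<Sum>s\<in>S. ?u s) = 1" using assms by simp
  ultimately show ?thesis by (intro hull_ofI[of S ?u]) auto
qed

lemma hull_comb:
  assumes "x \<in> hull_of S" "y \<in> hull_of S" "0 \<le> c" "c \<le> 1"
  shows "(\<lambda>j. c * x j + (1-c) * y j) \<in> hull_of S"
proof -
  from assms obtain u where u: "\<forall>s\<in>S. 0 \<le> u s" "sum u S = 1" "x = (\<lambda>j. \<Sum>s\<in>S. u s * s j)"
    unfolding hull_of_def by blast
  from assms obtain w where w: "\<forall>s\<in>S. 0 \<le> w s" "sum w S = 1" "y = (\<lambda>j. \<Sum>s\<in>S. w s * s j)"
    unfolding hull_of_def by blast
  let ?u = "\<lambda>s. c * u s + (1-c) * w s"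
  have "(\<lambda>j. c * x j + (1-c) * y j) = (\<lambda>j. \<Sum>s\<in>S. ?u s * s j)"
    by (simp add: u w sum_distrib_left sum.distrib distrib_right mult.assoc)
  moreover have "\<forall>s\<in>S. 0 \<le> ?u s" using u w assms by simp
  moreover have "(\<Sum>s\<in>S. ?u s) = 1" using u w by (simp add: sum.distrib sum_distrib_left[symmetric])
  ultimately show ?thesis by (intro hull_ofI[of S ?u]) auto
qed

lemma hull_scale:
  assumes "x \<in> hull_of S" "(\<lambda>_. 0) \<in> hull_of S" "0 \<le> c" "c \<le> 1"
  shows "(\<lambda>j. c * x j) \<in> hull_of S"
  using hull_comb[OF assms(1,2,3,4)] by simp

lemma hull_Rd: "S \<subseteq> Rd d \<Longrightarrow> hull_of S \<subseteq> Rd d"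
  unfolding hull_of_def Rd_def by (auto intro!: sum.neutral)

lemma hull_coord_zero: "\<forall>s\<in>S. s j = 0 \<Longrightarrow> x \<in> hull_of S \<Longrightarrow> x j = 0"
  unfolding hull_of_def by (auto intro!: sum.neutral)

definition idx :: "nat \<Rightarrow> nat \<Rightarrow> nat" where "idx k j = (if j < k then j else Suc j)"

definition proj :: "nat \<Rightarrow> (nat\<Rightarrow>real) \<Rightarrow> (nat\<Rightarrow>real) \<Rightarrow> (nat\<Rightarrow>real)" where
  "proj k v x = (\<lambda>j. x (idx k j) - x k / v k * v (idx k j))"

lemma proj_sum: "proj k v (\<lambda>j. \<Sum>s\<in>S. c s * f s j) = (\<lambda>j. \<Sum>s\<in>S. c s * proj k v (f s) j)"
  unfolding proj_def
  by (simp add: sum_subtractf sum_distrib_left sum_distrib_right sum_divide_distrib right_diff_distrib mult.assoc)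

lemma proj_sum1: "proj k v (\<lambda>j. \<Sum>i\<in>S. x i j) = (\<lambda>j. \<Sum>i\<in>S. proj k v (x i) j)"
  using proj_sum[where k=k and v=v and S=S and c="\<lambda>_. 1" and f=x] by simp

lemma proj_zero: "proj k v (\<lambda>_. 0) = (\<lambda>_. 0)"
  unfolding proj_def by simp

lemma proj_ker:
  assumes "v k \<noteq> 0" "proj k v x = proj k v z"
  shows "x = (\<lambda>j. z j + ((x k - z k) / v k) * v j)"
proof
  fix i
  have key: "x (idx k j) - x k / v k * v (idx k j) = z (idx k j) - z k / v k * v (idx k j)" for j
    using assms(2) unfolding proj_def by metis
  have alg: "x i - x k / v k * v i = z i - z k / v k * v i \<Longrightarrow> x i = z i + (x k - z k) / v k * v i"
    by (simp add: diff_divide_distrib left_diff_distrib)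
  show "x i = z i + (x k - z k) / v k * v i"
  proof (cases "i = k")
    case True then show ?thesis using assms(1) by simp
  next
    case False
    show ?thesis
    proof (cases "i < k")
      case True then show ?thesis using key[of i] alg by (simp add: idx_def)
    next
      case False
      with \<open>i \<noteq> k\<close> have "idx k (i - 1) = i" by (auto simp: idx_def)
      then show ?thesis using key[of "i-1"] alg by simp
    qed
  qed
qed

lemma proj_Rd:
  assumes "k < d" "x \<in> Rd d" "v \<in> Rd d" shows "proj k v x \<in> Rd (d-1)"
  unfolding Rd_def
proof (intro CollectI allI impI)
  fix j assume "d - 1 \<le> j"
  then have "idx k j = Suc j" "Suc j \<ge> d" using assms(1) by (auto simp: idx_def)
  then show "proj k v x j = 0" using assms(2,3) unfolding proj_def Rd_def by simp
qed

lemma hull_image: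
  assumes fin: "finite S"
  shows "proj k v ` hull_of S = hull_of (proj k v ` S)"
proof
  let ?T = "proj k v ` S"
  show "proj k v ` hull_of S \<subseteq> hull_of ?T"
  proof
    fix y assume "y \<in> proj k v ` hull_of S"
    then obtain u where u: "\<forall>s\<in>S. 0 \<le> u s" "sum u S = 1" 
      and y: "y = proj k v (\<lambda>j. \<Sum>s\<in>S. u s * s j)"
      unfolding hull_of_def by blast
    define u' where "u' t = sum u {s. s \<in> S \<and> proj k v s = t}" for t
    have "(\<lambda>j. \<Sum>t\<in>?T. u' t * t j) = y"
    proof
      fix j
      have "(\<Sum>t\<in>?T. u' t * t j) = (\<Sum>t\<in>?T. \<Sum>s\<in>{s. s \<in> S \<and> proj k v s = t}. u s * proj k v s j)"
        unfolding u'_def sum_distrib_right by (intro sum.cong) auto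
      also have "\<dots> = (\<Sum>s\<in>S. u s * proj k v s j)"
        by (rule sum.group) (use fin in auto)
      finally show "(\<Sum>t\<in>?T. u' t * t j) = y j" using y proj_sum[where k=k and v=v and S=S and c=u and f="\<lambda>s. s"] by simp
    qed
    moreover have "\<forall>t\<in>?T. 0 \<le> u' t" unfolding u'_def using u by (auto intro!: sum_nonneg)
    moreover have "(\<Sum>t\<in>?T. u' t) = 1" unfolding u'_def using u fin
      by (subst sum.group) auto
    ultimately show "y \<in> hull_of ?T" by (intro hull_ofI[of ?T u']) auto
  qed
  show "hull_of ?T \<subseteq> proj k v ` hull_of S"
  proof
    fix y assume "y \<in> hull_of ?T"
    then obtain w where w: "\<forall>t\<in>?T. 0 \<le> w t" "sum w ?T = 1" and y: "y = (\<lambda>j. \<Sum>t\<in>?T. w t * t j)"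
      unfolding hull_of_def by blast
    define F where "F t = {s. s \<in> S \<and> proj k v s = t}" for t
    define u where "u s = w (proj k v s) / card (F (proj k v s))" for s
    have cardF: "t \<in> ?T \<Longrightarrow> card (F t) > 0" for t
      unfolding F_def using fin by (auto simp: card_gt_0_iff)
    have gen: "(\<Sum>s\<in>S. u s * g (proj k v s)) = (\<Sum>t\<in>?T. w t * g t)" for g :: "_ \<Rightarrow> real"
    proof -
      have "(\<Sum>s\<in>S. u s * g (proj k v s)) = (\<Sum>t\<in>?T. \<Sum>s\<in>F t. u s * g (proj k v s))"
        unfolding F_def by (rule sum.group[symmetric]) (use fin in auto)
      also have "\<dots> = (\<Sum>t\<in>?T. \<Sum>s\<in>F t. w t / card (F t) * g t)"
        by (intro sum.cong refl) (auto simp: u_def F_def)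
      also have "\<dots> = (\<Sum>t\<in>?T. w t * g t)"
        using cardF by (intro sum.cong refl) auto
      finally show ?thesis .
    qed
    define x where "x = (\<lambda>j. \<Sum>s\<in>S. u s * s j)"
    have "x \<in> hull_of S"
    proof -
      have "\<forall>s\<in>S. 0 \<le> u s" using w unfolding u_def by auto
      moreover have "sum u S = 1" using gen[of "\<lambda>_. 1"] w by simp
      ultimately show ?thesis unfolding x_def by (intro hull_ofI[of S u]) auto
    qed
    moreover have "proj k v x = y"
      unfolding x_def proj_sum y using gen[of "\<lambda>t. t _"] by simp
    ultimately show "y \<in> proj k v ` hull_of S" by blast
  qed
qed


lemma msum_empty: "msum P {} = {(\<lambda>_. 0)}"
  unfolding msum_def by simp

lemma msumI: "\<forall>i\<in>\<sigma>. x i \<in> P i \<Longrightarrow> y = (\<lambda>j. \<Sum>i\<in>\<sigma>. x i j) \<Longrightarrow> y \<in> msum P \<sigma>"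
  unfolding msum_def by blast

lemma msum_pairE:
  assumes "\<mu> \<in> msum P {a, c}" "a \<noteq> c"
  obtains p q where "p \<in> P a" "q \<in> P c" "\<mu> = (\<lambda>j. p j + q j)"
  using assms unfolding msum_def by auto

lemma msum_pairI:
  assumes "p \<in> P a" "r \<in> P b" "a \<noteq> b"
  shows "(\<lambda>j. p j + r j) \<in> msum P {a, b}"
proof -
  let ?x = "\<lambda>i. if i = a then p else r"
  have "(\<lambda>j. p j + r j) = (\<lambda>j. \<Sum>i\<in>{a,b}. ?x i j)" using assms by simp
  moreover have "\<forall>i\<in>{a,b}. ?x i \<in> P i" using assms by auto
  ultimately show ?thesis by (intro msumI[of _ ?x]) auto
qed

lemma msum_proj_in:
  assumes "\<mu> \<in> msum P \<sigma>"
  shows "proj k v \<mu> \<in> msum (\<lambda>i. proj k v ` P i) \<sigma>"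
proof -
  obtain x where x: "\<forall>i\<in>\<sigma>. x i \<in> P i" "\<mu> = (\<lambda>j. \<Sum>i\<in>\<sigma>. x i j)"
    using assms unfolding msum_def by blast
  have "proj k v \<mu> = (\<lambda>j. \<Sum>i\<in>\<sigma>. proj k v (x i) j)" using x(2) proj_sum1 by simp
  moreover have "\<forall>i\<in>\<sigma>. proj k v (x i) \<in> proj k v ` P i" using x(1) by auto
  ultimately show ?thesis by (intro msumI[of _ "\<lambda>i. proj k v (x i)"]) auto
qed

lemma msum_proj_out:
  assumes "y \<in> msum (\<lambda>i. proj k v ` P i) \<sigma>"
  shows "\<exists>z\<in>msum P \<sigma>. y = proj k v z"
proof -
  obtain x' where x': "\<forall>i\<in>\<sigma>. x' i \<in> proj k v ` P i" "y = (\<lambda>j. \<Sum>i\<in>\<sigma>. x' i j)"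
    using assms unfolding msum_def by blast
  then have "\<forall>i\<in>\<sigma>. \<exists>z. z \<in> P i \<and> x' i = proj k v z" by blast
  then obtain f where f: "\<forall>i\<in>\<sigma>. f i \<in> P i \<and> x' i = proj k v (f i)" by metis
  define z where "z = (\<lambda>j. \<Sum>i\<in>\<sigma>. f i j)"
  have "z \<in> msum P \<sigma>" unfolding msum_def z_def using f by blast
  moreover have "proj k v z = y" unfolding z_def proj_sum1 x'(2)
    using f by (auto intro!: sum.cong)
  ultimately show ?thesis by blast
qed

lemma mix:
  assumes fin: "finite \<sigma>" and ab: "a \<noteq> b" "a \<notin> \<sigma>" "b \<notin> \<sigma>"
    and z: "z \<in> msum P \<sigma>" and p: "p \<in> P a" and r: "r \<in> P b"
    and cvx: "\<And>i y c. i \<in> insert a (insert b \<sigma>) \<Longrightarrow> y \<in> P i \<Longrightarrow> 0 \<le> c \<Longrightarrow> c \<le> 1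
               \<Longrightarrow> (\<lambda>j. c * y j) \<in> P i"
    and t: "0 \<le> t" and mu: "\<And>j. \<mu> j = z j + t * (p j + r j - \<mu> j)"
  shows "\<mu> \<in> msum P (insert a (insert b \<sigma>))"
proof -
  obtain x where x: "\<forall>i\<in>\<sigma>. x i \<in> P i" "z = (\<lambda>j. \<Sum>i\<in>\<sigma>. x i j)"
    using z unfolding msum_def by blast
  define l where "l = t / (1+t)"
  have l: "0 \<le> l" "l \<le> 1" using t unfolding l_def by auto
  define x' where "x' = (\<lambda>i. if i = a then (\<lambda>j. l * p j) else if i = b then (\<lambda>j. l * r j)
       else (\<lambda>j. (1-l) * x i j))"
  have mem: "\<forall>i\<in>insert a (insert b \<sigma>). x' i \<in> P i"
    unfolding x'_def using x(1) l ab p r by (auto intro!: cvx)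
  have eq: "\<mu> = (\<lambda>j. \<Sum>i\<in>insert a (insert b \<sigma>). x' i j)"
  proof
    fix j
    have s: "(\<Sum>i\<in>\<sigma>. x' i j) = (1-l) * z j"
      unfolding x(2) sum_distrib_left using ab by (auto simp: x'_def intro!: sum.cong)
    have "(\<Sum>i\<in>insert a (insert b \<sigma>). x' i j) = l * p j + l * r j + (1-l) * z j"
      using fin ab s by (simp add: x'_def)
    moreover have "\<mu> j * (1 + t) = z j + t * (p j + r j)" using mu[of j] by (simp add: algebra_simps)
    then have "\<mu> j = (z j + t * (p j + r j)) / (1 + t)" using t by (simp add: eq_divide_eq)
    moreover have "l * p j + l * r j + (1-l) * z j = (z j + t * (p j + r j)) / (1 + t)"
    proof -
      have "1 - l = 1 / (1 + t)" using t unfolding l_def by (simp add: field_simps)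
      then have "l * p j + l * r j + (1-l) * z j = t / (1+t) * p j + t / (1+t) * r j + 1 / (1+t) * z j"
        unfolding l_def by simp
      also have "\<dots> = (t * p j + t * r j + z j) / (1 + t)"
        by (simp add: add_divide_distrib)
      finally show ?thesis by (simp add: algebra_simps)
    qed
    ultimately show "\<mu> j = (\<Sum>i\<in>insert a (insert b \<sigma>). x' i j)" by simp
  qed
  show ?thesis using mem eq by (rule msumI)
qed


lemma reduce:
  assumes scK: "simplicial_complex V K" and scL: "simplicial_complex W L" and disj: "V \<inter> W = {}"
    and W4: "a \<in> W" "b \<in> W" "c \<in> W" "d \<in> W"
    and eab: "edge L a b" and ecd: "edge L c d" and nac: "\<not> edge L a c" and nbd: "\<not> edge L b d"
    and ac: "a \<noteq> c" and bd: "b \<noteq> d"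
    and real: "ctd_realizable D (V \<union> W) (join K L)"
  shows "1 \<le> D \<and> ctd_realizable (D - 1) V K"
proof -
  obtain P \<mu> where Ppol: "\<forall>i\<in>V\<union>W. polytope_in D (P i) \<and> (\<lambda>_. 0) \<in> P i"
    and muR: "\<mu> \<in> Rd D" and J: "join K L = minkowski_complex (V\<union>W) P \<mu>"
    using real unfolding ctd_realizable_def by blast
  have finV: "finite V" and Kd: "\<And>\<sigma>. \<sigma> \<in> K \<Longrightarrow> \<sigma> \<subseteq> V" and K0: "{} \<in> K"
    using scK unfolding simplicial_complex_def by auto
  have Ld: "\<And>\<sigma>. \<sigma> \<in> L \<Longrightarrow> \<sigma> \<subseteq> W"
    using scL unfolding simplicial_complex_def by auto
  have F1: "\<mu> \<notin> msum P (\<sigma> \<union> \<tau>)" if "\<sigma> \<in> K" "\<tau> \<in> L" for \<sigma> \<tau>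
  proof -
    have "\<sigma> \<union> \<tau> \<in> join K L" unfolding join_def using that by blast
    then show ?thesis using J unfolding minkowski_complex_def by blast
  qed
  have F2: "\<mu> \<in> msum P \<sigma>" if "\<sigma> \<subseteq> V \<union> W" "\<sigma> \<notin> join K L" for \<sigma>
    using that J unfolding minkowski_complex_def by blast
  have joinV: "\<sigma> \<in> K" if h1: "\<sigma> \<subseteq> V" and h2: "\<sigma> \<in> join K L" for \<sigma>
  proof -
    obtain \<sigma>' \<tau>' where st: "\<sigma> = \<sigma>' \<union> \<tau>'" "\<sigma>' \<in> K" "\<tau>' \<in> L"
      using h2 unfolding join_def by blast
    then have "\<tau>' = {}" using Ld[OF st(3)] h1 disj by blast
    then show ?thesis using st by simp
  qed
  have nonjoin: "{x, y} \<notin> join K L" if hh: "x \<in> W" "y \<in> W" "x \<noteq> y" "\<not> edge L x y" for x y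
  proof
    assume "{x, y} \<in> join K L"
    then obtain \<sigma>' \<tau>' where st: "{x,y} = \<sigma>' \<union> \<tau>'" "\<sigma>' \<in> K" "\<tau>' \<in> L"
      unfolding join_def by blast
    have xy: "x \<notin> V" "y \<notin> V" using hh(1,2) disj by auto
    have "\<sigma>' \<subseteq> {x,y}" using st(1) by (rule equalityD2[THEN subset_trans[rotated]]) simp
    moreover have "\<sigma>' \<subseteq> V" using Kd[OF st(2)] .
    ultimately have "\<sigma>' = {}" using xy by auto
    then have "{x,y} \<in> L" using st by simp
    then show False using hh(3,4) unfolding edge_def by simp
  qed
  have "{a,c} \<subseteq> V \<union> W" "{b,d} \<subseteq> V \<union> W" using W4 by auto
  then have "\<mu> \<in> msum P {a,c}" "\<mu> \<in> msum P {b,d}"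
    using F2 nonjoin[OF W4(1,3) ac nac] nonjoin[OF W4(2,4) bd nbd] by blast+
  obtain p q where pq: "p \<in> P a" "q \<in> P c" "\<mu> = (\<lambda>j. p j + q j)"
    using msum_pairE[OF \<open>\<mu> \<in> msum P {a,c}\<close> ac] by metis
  obtain r s where rs: "r \<in> P b" "s \<in> P d" "\<mu> = (\<lambda>j. r j + s j)"
    using msum_pairE[OF \<open>\<mu> \<in> msum P {b,d}\<close> bd] by metis
  have PRd: "P i \<subseteq> Rd D" if "i \<in> V \<union> W" for i
    using Ppol that hull_Rd unfolding polytope_in_hull by blast
  have cvx: "(\<lambda>j. c * y j) \<in> P i" if hc: "i \<in> V \<union> W" "y \<in> P i" "0 \<le> c" "c \<le> 1" for i y c
  proof -
    obtain S where "P i = hull_of S" using Ppol hc(1) unfolding polytope_in_hull by blast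
    then show ?thesis using hull_scale[of y S c] Ppol hc by auto
  qed
  have ab: "a \<noteq> b" and cd: "c \<noteq> d" and abL: "{a,b} \<in> L" and cdL: "{c,d} \<in> L"
    using eab ecd unfolding edge_def by auto
  define v where "v = (\<lambda>j. p j + r j - \<mu> j)"
  have "p \<in> Rd D" "r \<in> Rd D" using PRd[of a] PRd[of b] W4 pq(1) rs(1) by auto
  then have vR: "v \<in> Rd D"
    using muR unfolding v_def Rd_def by simp
  have "v \<noteq> (\<lambda>_. 0)"
  proof
    assume "v = (\<lambda>_. 0)"
    then have "\<mu> = (\<lambda>j. p j + r j)" unfolding v_def by (auto simp: fun_eq_iff)
    then have "\<mu> \<in> msum P {a,b}" using msum_pairI[OF pq(1) rs(1) ab] by simp
    then show False using F1[OF K0 abL] by simp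
  qed
  then obtain k where vk: "v k \<noteq> 0" by auto
  have kD: "k < D" using vk vR unfolding Rd_def by (metis (mono_tags, lifting) mem_Collect_eq not_le)
  define \<pi> where "\<pi> = proj k v"
  have face: "\<pi> \<mu> \<notin> msum (\<lambda>i. \<pi> ` P i) \<sigma>" if \<sigma>K: "\<sigma> \<in> K" for \<sigma>
  proof
    assume "\<pi> \<mu> \<in> msum (\<lambda>i. \<pi> ` P i) \<sigma>"
    then obtain z where z: "z \<in> msum P \<sigma>" "\<pi> \<mu> = \<pi> z"
      using msum_proj_out[of "\<pi> \<mu>" k v P \<sigma>] unfolding \<pi>_def by metis
    define t where "t = (\<mu> k - z k) / v k"
    have "proj k v \<mu> = proj k v z" using z(2) unfolding \<pi>_def .
    from proj_ker[OF vk this] have mz: "\<mu> = (\<lambda>j. z j + t * v j)" unfolding t_def .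
    have sV: "\<sigma> \<subseteq> V" using Kd[OF \<sigma>K] .
    have fs: "finite \<sigma>" using sV finV finite_subset by blast
    have notin: "a \<notin> \<sigma>" "b \<notin> \<sigma>" "c \<notin> \<sigma>" "d \<notin> \<sigma>" using sV W4 disj by auto
    show False
    proof (cases "0 \<le> t")
      case True
      have "\<mu> \<in> msum P (insert a (insert b \<sigma>))"
      proof (rule mix[OF fs ab notin(1,2) z(1) pq(1) rs(1) _ True])
        fix i y x assume "i \<in> insert a (insert b \<sigma>)" "y \<in> P i" "0 \<le> (x::real)" "x \<le> 1"
        moreover then have "i \<in> V \<union> W" using sV W4 by auto
        ultimately show "(\<lambda>j. x * y j) \<in> P i" using cvx by simp
      next
        fix j
        have e: "\<mu> j = z j + t * v j" using fun_cong[OF mz, of j] by simp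
        show "\<mu> j = z j + t * (p j + r j - \<mu> j)" using e unfolding v_def .
      qed
      moreover have "\<mu> \<notin> msum P (insert a (insert b \<sigma>))" using F1[OF \<sigma>K abL] by simp
      ultimately show False by contradiction
    next
      case False
      have "\<mu> \<in> msum P (insert c (insert d \<sigma>))"
      proof (rule mix[OF fs cd notin(3,4) z(1) pq(2) rs(2) _, of "-t"])
        fix i y x assume "i \<in> insert c (insert d \<sigma>)" "y \<in> P i" "0 \<le> (x::real)" "x \<le> 1"
        moreover then have "i \<in> V \<union> W" using sV W4 by auto
        ultimately show "(\<lambda>j. x * y j) \<in> P i" using cvx by simp
      next
        show "0 \<le> - t" using False by simp
        show "\<mu> j = z j + - t * (q j + s j - \<mu> j)" for j
        proof -
          have "\<mu> j = z j + t * v j" using fun_cong[OF mz, of j] by simp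
          moreover have "\<mu> j = p j + q j" "\<mu> j = r j + s j" using fun_cong[OF pq(3), of j] fun_cong[OF rs(3), of j] by simp_all
          ultimately have e2: "q j + s j - \<mu> j = - v j" unfolding v_def by linarith
          show ?thesis unfolding e2 using \<open>\<mu> j = z j + t * v j\<close> by simp
        qed
      qed
      moreover have "\<mu> \<notin> msum P (insert c (insert d \<sigma>))" using F1[OF \<sigma>K cdL] by simp
      ultimately show False by contradiction
    qed
  qed
  have "ctd_realizable (D - 1) V K"
    unfolding ctd_realizable_def
  proof (intro exI conjI ballI)
    fix i assume iV: "i \<in> V"
    obtain S where S: "finite S" "S \<subseteq> Rd D" "P i = hull_of S"
      using Ppol iV unfolding polytope_in_hull by blast
    have "\<pi> ` P i = hull_of (\<pi> ` S)" using S hull_image unfolding \<pi>_def by blast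
    moreover have "\<pi> ` S \<subseteq> Rd (D - 1)" using S(2) proj_Rd[OF kD _ vR] unfolding \<pi>_def by blast
    ultimately show "polytope_in (D - 1) (\<pi> ` P i)" unfolding polytope_in_hull using S(1) by blast
    show "(\<lambda>_. 0) \<in> \<pi> ` P i" using Ppol iV proj_zero[of k v] unfolding \<pi>_def by (metis image_eqI UnI1)
  next
    show "\<pi> \<mu> \<in> Rd (D - 1)" using proj_Rd[OF kD muR vR] unfolding \<pi>_def .
  next
    show "K = minkowski_complex V (\<lambda>i. \<pi> ` P i) (\<pi> \<mu>)"
      unfolding minkowski_complex_def
    proof (intro set_eqI iffI)
      fix \<sigma> assume "\<sigma> \<in> K"
      then show "\<sigma> \<in> {\<sigma>. \<sigma> \<subseteq> V \<and> \<pi> \<mu> \<notin> msum (\<lambda>i. \<pi> ` P i) \<sigma>}" using Kd face by blast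
    next
      fix \<sigma> assume "\<sigma> \<in> {\<sigma>. \<sigma> \<subseteq> V \<and> \<pi> \<mu> \<notin> msum (\<lambda>i. \<pi> ` P i) \<sigma>}"
      then have sV: "\<sigma> \<subseteq> V" and nm: "\<pi> \<mu> \<notin> msum (\<lambda>i. \<pi> ` P i) \<sigma>" by auto
      show "\<sigma> \<in> K"
      proof (rule ccontr)
        assume "\<sigma> \<notin> K"
        then have "\<sigma> \<notin> join K L" using joinV sV by blast
        then have "\<mu> \<in> msum P \<sigma>" using F2 sV by blast
        then show False using nm msum_proj_in unfolding \<pi>_def by blast
      qed
    qed
  qed
  then show ?thesis using kD by simp
qed


lemma sc_facts:
  assumes "simplicial_complex V K"
  shows "finite V" "{} \<in> K" "\<And>\<sigma>. \<sigma> \<in> K \<Longrightarrow> \<sigma> \<subseteq> V"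
    "\<And>\<sigma> \<tau>. \<sigma> \<in> K \<Longrightarrow> \<tau> \<subseteq> \<sigma> \<Longrightarrow> \<tau> \<in> K"
proof -
  have A: "finite V \<and> {} \<in> K \<and> (\<forall>\<sigma>\<in>K. \<sigma> \<subseteq> V) \<and> (\<forall>\<sigma>\<in>K. \<forall>\<tau>. \<tau> \<subseteq> \<sigma> \<longrightarrow> \<tau> \<in> K)"
    using assms unfolding simplicial_complex_def .
  show "finite V" using A by (rule conjunct1)
  show "{} \<in> K" using A[THEN conjunct2] by (rule conjunct1)
  show "\<And>\<sigma>. \<sigma> \<in> K \<Longrightarrow> \<sigma> \<subseteq> V" using A[THEN conjunct2, THEN conjunct2, THEN conjunct1] by (rule bspec)
  fix \<sigma> \<tau> assume "\<sigma> \<in> K" "\<tau> \<subseteq> \<sigma>"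
  then show "\<tau> \<in> K" using A[THEN conjunct2, THEN conjunct2, THEN conjunct2] by blast
qed

lemma join_sc:
  assumes "simplicial_complex V K" "simplicial_complex W L"
  shows "simplicial_complex (V \<union> W) (join K L)"
proof -
  note fin = sc_facts(1)[OF assms(1)] sc_facts(1)[OF assms(2)]
  note K0 = sc_facts(2)[OF assms(1)] and L0 = sc_facts(2)[OF assms(2)]
  note Kd = sc_facts(3)[OF assms(1)] and Ld = sc_facts(3)[OF assms(2)]
  note Kc = sc_facts(4)[OF assms(1)] and Lc = sc_facts(4)[OF assms(2)]
  have "{} = {} \<union> {}" by simp
  then have j0: "{} \<in> join K L" unfolding join_def using K0 L0 by blast
  have jd: "\<sigma> \<subseteq> V \<union> W" if hj: "\<sigma> \<in> join K L" for \<sigma>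
  proof -
    obtain \<sigma>' \<rho> where st: "\<sigma> = \<sigma>' \<union> \<rho>" "\<sigma>' \<in> K" "\<rho> \<in> L"
      using hj unfolding join_def by blast
    then show ?thesis using Kd[OF st(2)] Ld[OF st(3)] by auto
  qed
  have jc: "\<tau> \<in> join K L" if h: "\<sigma> \<in> join K L" "\<tau> \<subseteq> \<sigma>" for \<sigma> \<tau>
  proof -
    obtain \<sigma>' \<rho> where st: "\<sigma> = \<sigma>' \<union> \<rho>" "\<sigma>' \<in> K" "\<rho> \<in> L"
      using h(1) unfolding join_def by blast
    have "\<tau> \<inter> \<sigma>' \<in> K" "\<tau> \<inter> \<rho> \<in> L"
      using Kc[OF st(2)] Lc[OF st(3)] by auto
    moreover have "\<tau> = (\<tau> \<inter> \<sigma>') \<union> (\<tau> \<inter> \<rho>)" using h(2) st(1) by blast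
    ultimately show "\<tau> \<in> join K L" unfolding join_def by blast
  qed
  show ?thesis unfolding simplicial_complex_def
  proof (intro conjI ballI allI impI)
    show "finite (V \<union> W)" using fin by simp
  qed (use j0 jd jc in auto)
qed

lemma realizable_exists:
  assumes sc: "simplicial_complex U M"
  shows "\<exists>d. ctd_realizable d U M"
proof -
  note finU = sc_facts(1)[OF sc] and MU = sc_facts(3)[OF sc] and Mc = sc_facts(4)[OF sc]
  have "M \<subseteq> Pow U" using MU by blast
  then have "finite M" using finU by (simp add: finite_subset)
  then obtain m g where Mg: "M = g ` {i. i < (m::nat)}"
    using finite_imp_nat_seg_image_inj_on[of M] by metis
  define A where "A i = {j. j < m \<and> i \<notin> g j}" for i
  define ind where "ind J = (\<lambda>k. if k \<in> J then 1 else (0::real))" for J :: "nat set"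
  define S where "S i = ind ` Pow (A i)" for i
  define P where "P i = hull_of (S i)" for i
  define \<mu> where "\<mu> = ind {..<m}"
  have finS: "finite (S i)" for i unfolding S_def A_def by simp
  have SR: "S i \<subseteq> Rd m" for i unfolding S_def A_def Rd_def ind_def by auto
  have P0: "(\<lambda>_. 0) \<in> P i" for i
  proof -
    have "ind {} \<in> S i" unfolding S_def by blast
    moreover have "ind {} = (\<lambda>_. 0)" unfolding ind_def by simp
    ultimately show ?thesis unfolding P_def using hull_mem[OF finS] by metis
  qed
  have muR: "\<mu> \<in> Rd m" unfolding \<mu>_def Rd_def ind_def by auto
  have key1: "\<mu> \<in> msum P \<sigma>" if sU: "\<sigma> \<subseteq> U" and all: "\<forall>j<m. \<exists>i\<in>\<sigma>. i \<notin> g j" for \<sigma>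
  proof -
    have "\<forall>j. \<exists>i. j < m \<longrightarrow> i \<in> \<sigma> \<and> i \<notin> g j" using all by blast
    then obtain ch where "\<forall>j. j < m \<longrightarrow> ch j \<in> \<sigma> \<and> ch j \<notin> g j" by (rule choice[THEN exE])
    then have ch: "\<forall>j<m. ch j \<in> \<sigma> \<and> ch j \<notin> g j" by blast
    define x where "x i = ind {j. j < m \<and> ch j = i}" for i
    have fs: "finite \<sigma>" using sU finU finite_subset by blast
    have "x i \<in> P i" if "i \<in> \<sigma>" for i
    proof -
      have "{j. j < m \<and> ch j = i} \<subseteq> A i" unfolding A_def using ch by auto
      then have "x i \<in> S i" unfolding x_def S_def by blast
      then show ?thesis unfolding P_def using hull_mem[OF finS] by blast
    qed
    moreover have "\<mu> = (\<lambda>k. \<Sum>i\<in>\<sigma>. x i k)"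
    proof
      fix k
      show "\<mu> k = (\<Sum>i\<in>\<sigma>. x i k)"
      proof (cases "k < m")
        case True
        have "(\<Sum>i\<in>\<sigma>. x i k) = (\<Sum>i\<in>\<sigma>. if ch k = i then 1 else 0)"
          unfolding x_def ind_def using True by (intro sum.cong) auto
        also have "\<dots> = 1" using fs ch True by simp
        finally show ?thesis unfolding \<mu>_def ind_def using True by simp
      next
        case False
        then show ?thesis unfolding \<mu>_def ind_def x_def by simp
      qed
    qed
    ultimately show ?thesis by (intro msumI) auto
  qed
  have key2: False if mm: "\<mu> \<in> msum P \<sigma>" and jm: "j < m" and sj: "\<sigma> \<subseteq> g j" for \<sigma> j
  proof -
    obtain x where x: "\<forall>i\<in>\<sigma>. x i \<in> P i" "\<mu> = (\<lambda>k. \<Sum>i\<in>\<sigma>. x i k)"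
      using mm unfolding msum_def by blast
    have "x i j = 0" if "i \<in> \<sigma>" for i
    proof (rule hull_coord_zero)
      show "\<forall>s\<in>S i. s j = 0" unfolding S_def A_def ind_def using that sj by auto
      show "x i \<in> hull_of (S i)" using x(1) that unfolding P_def by blast
    qed
    then have "\<mu> j = 0" using x(2) by simp
    moreover have "\<mu> j = 1" unfolding \<mu>_def ind_def using jm by simp
    ultimately show False by simp
  qed
  have "ctd_realizable m U M"
    unfolding ctd_realizable_def
  proof (intro exI conjI ballI)
    fix i show "polytope_in m (P i)" unfolding polytope_in_hull P_def using finS SR by blast
    show "(\<lambda>_. 0) \<in> P i" by (rule P0)
  next
    show "\<mu> \<in> Rd m" by (rule muR)
  next
    show "M = minkowski_complex U P \<mu>"
      unfolding minkowski_complex_def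
    proof (intro set_eqI iffI)
      fix \<sigma> assume h: "\<sigma> \<in> M"
      then obtain j where "j < m" "\<sigma> = g j" using Mg by blast
      then show "\<sigma> \<in> {\<sigma>. \<sigma> \<subseteq> U \<and> \<mu> \<notin> msum P \<sigma>}" using key2 MU[OF h] by blast
    next
      fix \<sigma> assume "\<sigma> \<in> {\<sigma>. \<sigma> \<subseteq> U \<and> \<mu> \<notin> msum P \<sigma>}"
      then have sU: "\<sigma> \<subseteq> U" and nm: "\<mu> \<notin> msum P \<sigma>" by auto
      then obtain j where "j < m" "\<forall>i\<in>\<sigma>. i \<in> g j" using key1 by blast
      then have "\<sigma> \<subseteq> g j" "g j \<in> M" using Mg by auto
      then show "\<sigma> \<in> M" using Mc by blast
    qed
  qed
  then show ?thesis by blast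
qed

theorem theorem3:
  fixes V W :: "'v set" and K L :: "'v set set"
  assumes "simplicial_complex V K"
    and "simplicial_complex W L"
    and "V \<inter> W = {}"
    and "has_induced_2K2_P4_C4 W L"
  shows "ctd (V \<union> W) (join K L) \<ge> ctd V K + 1"
proof -
  obtain a b c d where W4: "a \<in> W" "b \<in> W" "c \<in> W" "d \<in> W" and dist: "distinct [a,b,c,d]"
    and e: "edge L a b" "edge L c d" "\<not> edge L a c" "\<not> edge L b d"
    using assms(4) unfolding has_induced_2K2_P4_C4_def insert_subset by blast
  have ac: "a \<noteq> c" and bd: "b \<noteq> d" using dist by auto
  obtain d0 where "ctd_realizable d0 (V \<union> W) (join K L)"
    using realizable_exists[OF join_sc[OF assms(1,2)]] by blast
  then have rD: "ctd_realizable (ctd (V \<union> W) (join K L)) (V \<union> W) (join K L)"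
    unfolding ctd_def by (rule LeastI)
  have red: "1 \<le> ctd (V \<union> W) (join K L) \<and> ctd_realizable (ctd (V \<union> W) (join K L) - 1) V K"
    by (rule reduce[OF assms(1,2,3) W4 e ac bd rD])
  then have "ctd V K \<le> ctd (V \<union> W) (join K L) - 1"
    unfolding ctd_def[of V K] by (intro Least_le) simp
  then show ?thesis using red[THEN conjunct1] by linarith
qed

end
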